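(* Suppose the jobs are indexed so that $e_1\ge e_2\ge\dots\ge e_n$, where $e_j=w_j/p_j$. Let $\sigma$ be a proper schedule and $\sigma'$ the intermediate schedule obtained from $\sigma$ by an admissible swap at some step $j^*$ between machines $M_h$ and $M_i$. Then $\sum_j w_jC_j(\sigma')\le\sum_j w_jC_j(\sigma)$.
   Context: Jobs $J=\{1,\dots,n\}$, job $j$ with positive integer processing time $p_j$ and nonnegative integer weight $w_j$, are scheduled non-preemptively on $m$ identical machines $M_1,\dots,M_m$; $p_{\max}=\max_j p_j$, $P(X)=\sum_{j\in X}p_j$. A proper schedule $\sigma$ is a partition $J=J_1(\sigma)\cup\dots\cup J_m(\sigma)$, the jobs of $J_i(\sigma)$ processed on $M_i$ consecutively from time $0$ without idle time in increasing index order; $C_j(\sigma)$ is the completion time of $j$. $J_j=\{1,\dots,j\}$, $J_{i,j}(\sigma)=J_i(\sigma)\cap J_j$, $\Delta_{h,i,j}(\sigma)=P(J_{h,j}(\sigma))-P(J_{i,j}(\sigma))$. The swap: admissible for proper $\sigma$ at step $j^*$ with machines $M_h,M_i$ if $j^*\in J_h(\sigma)$, $|J_i(\sigma)\setminus J_{i,j^*}(\sigma)|\ge 2p_{\max}$, and $\Delta_{h,i,j^*}(\sigma)\ge 4p_{\max}^2$. Let $J_I$ be the first (smallest-index) $2p_{\max}$ jobs of $J_i(\sigma)\setminus J_{i,j^*}(\sigma)$ and $J_H$ the last (largest-index) $2p_{\max}$ jobs of $J_{h,j^*}(\sigma)$; choose non-empty $J_{H'}\subseteq J_H$, $J_{I'}\subseteq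 J_I$ with $P(J_{H'})=P(J_{I'})$. The intermediate schedule $\sigma'$: on $M_h$ the time interval occupied by $J_H$ in $\sigma$ is filled by $J_H\setminus J_{H'}$ then $J_{I'}$; on $M_i$ the interval occupied by $J_I$ is filled by $J_{H'}$ then $J_I\setminus J_{I'}$ (each group in its order in $\sigma$); all other jobs keep their positions. *)

theory Defs
  imports Complex_Main
begin

text \<open>Jobs are 1..n, machines 1..m. A proper schedule is given by the machine
assignment sigma; jobs on each machine run in increasing index order from time 0.
A (general) schedule is given by a job sequence per machine.\<close>

definition proper :: "nat \<Rightarrow> nat \<Rightarrow> (nat \<Rightarrow> nat) \<Rightarrow> bool" where
  "proper n m \<sigma> \<longleftrightarrow> (\<forall>j\<in>{1..n}. \<sigma> j \<in> {1..m})"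

definition Jm :: "nat \<Rightarrow> (nat \<Rightarrow> nat) \<Rightarrow> nat \<Rightarrow> nat set" where
  "Jm n \<sigma> i = {j \<in> {1..n}. \<sigma> j = i}"

definition Jpre :: "nat \<Rightarrow> (nat \<Rightarrow> nat) \<Rightarrow> nat \<Rightarrow> nat \<Rightarrow> nat set" where
  "Jpre n \<sigma> i j = Jm n \<sigma> i \<inter> {1..j}"

definition PP :: "(nat \<Rightarrow> nat) \<Rightarrow> nat set \<Rightarrow> nat" where
  "PP p X = (\<Sum>x\<in>X. p x)"

definition pmax :: "nat \<Rightarrow> (nat \<Rightarrow> nat) \<Rightarrow> nat" where
  "pmax n p = Max (p ` {1..n})"

definition ctime :: "(nat \<Rightarrow> nat) \<Rightarrow> nat list \<Rightarrow> nat \<Rightarrow> nat" where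
  "ctime p L j = sum_list (map p (takeWhile (\<lambda>x. x \<noteq> j) L)) + p j"

definition twct :: "nat \<Rightarrow> (nat \<Rightarrow> nat) \<Rightarrow> (nat \<Rightarrow> nat) \<Rightarrow> (nat \<Rightarrow> nat list) \<Rightarrow> nat" where
  "twct m p w S = (\<Sum>l\<in>{1..m}. \<Sum>j\<in>set (S l). w j * ctime p (S l) j)"

definition proper_seq :: "nat \<Rightarrow> (nat \<Rightarrow> nat) \<Rightarrow> nat \<Rightarrow> nat list" where
  "proper_seq n \<sigma> l = sorted_list_of_set (Jm n \<sigma> l)"

definition JI :: "nat \<Rightarrow> (nat \<Rightarrow> nat) \<Rightarrow> (nat \<Rightarrow> nat) \<Rightarrow> nat \<Rightarrow> nat \<Rightarrow> nat set" where
  "JI n p \<sigma> i js = set (take (2 * pmax n p) (sorted_list_of_set (Jm n \<sigma> i - Jpre n \<sigma> i js)))"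

definition JH :: "nat \<Rightarrow> (nat \<Rightarrow> nat) \<Rightarrow> (nat \<Rightarrow> nat) \<Rightarrow> nat \<Rightarrow> nat \<Rightarrow> nat set" where
  "JH n p \<sigma> h js = (let L = sorted_list_of_set (Jpre n \<sigma> h js)
                      in set (drop (length L - 2 * pmax n p) L))"

definition admissible :: "nat \<Rightarrow> nat \<Rightarrow> (nat \<Rightarrow> nat) \<Rightarrow> (nat \<Rightarrow> nat) \<Rightarrow> nat \<Rightarrow> nat \<Rightarrow> nat \<Rightarrow> bool" where
  "admissible n m p \<sigma> js h i \<longleftrightarrow>
     h \<in> {1..m} \<and> i \<in> {1..m} \<and> js \<in> {1..n} \<and> js \<in> Jm n \<sigma> h \<and>
     card (Jm n \<sigma> i - Jpre n \<sigma> i js) \<ge> 2 * pmax n p \<and>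
     int (PP p (Jpre n \<sigma> h js)) - int (PP p (Jpre n \<sigma> i js)) \<ge> 4 * int (pmax n p) ^ 2"

definition swap_seq :: "nat \<Rightarrow> (nat \<Rightarrow> nat) \<Rightarrow> (nat \<Rightarrow> nat) \<Rightarrow> nat \<Rightarrow> nat \<Rightarrow> nat \<Rightarrow> nat set \<Rightarrow> nat set \<Rightarrow> nat \<Rightarrow> nat list" where
  "swap_seq n p \<sigma> js h i H' I' l =
     (if l = h then
        sorted_list_of_set (Jpre n \<sigma> h js - JH n p \<sigma> h js)
        @ sorted_list_of_set (JH n p \<sigma> h js - H')
        @ sorted_list_of_set I'
        @ sorted_list_of_set (Jm n \<sigma> h - Jpre n \<sigma> h js)
      else if l = i then
        sorted_list_of_set (Jpre n \<sigma> i js)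
        @ sorted_list_of_set H'
        @ sorted_list_of_set (JI n p \<sigma> i js - I')
        @ sorted_list_of_set (Jm n \<sigma> i - Jpre n \<sigma> i js - JI n p \<sigma> i js)
      else proper_seq n \<sigma> l)"

end

theory Submission
  imports Defs
begin


lemma sl_sorted: "finite X \<Longrightarrow> sum_list (map p (sorted_list_of_set X)) = PP p X"
  by (simp add: PP_def sum_list_distinct_conv_sum_set)

lemma tw_set: "sorted_wrt (<) L \<Longrightarrow> j \<in> set L \<Longrightarrow> set (takeWhile (\<lambda>x. x \<noteq> j) L) = {x\<in>set L. x < (j::nat)}"
  by (induction L) auto

lemma ctime_sw: "sorted_wrt (<) L \<Longrightarrow> j \<in> set L \<Longrightarrow> ctime p L j = PP p {x\<in>set L. x < (j::nat)} + p j"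
proof -
  assume a: "sorted_wrt (<) L" "j \<in> set L"
  hence "distinct L" using strict_sorted_iff by blast
  hence "distinct (takeWhile (\<lambda>x. x \<noteq> j) L)" by simp
  thus ?thesis using a tw_set[OF a] by (simp add: ctime_def PP_def sum_list_distinct_conv_sum_set)
qed

lemma ctime_sorted: "finite X \<Longrightarrow> j \<in> X \<Longrightarrow> ctime p (sorted_list_of_set X) j = PP p {x\<in>X. x < (j::nat)} + p j"
  using ctime_sw[of "sorted_list_of_set X" j p] by (simp add: strict_sorted_list_of_set)

lemma ctime_app1: "j \<in> set L1 \<Longrightarrow> ctime p (L1 @ L2) j = ctime p L1 j"
  by (simp add: ctime_def)

lemma ctime_app2: "j \<notin> set L1 \<Longrightarrow> ctime p (L1 @ L2) j = sum_list (map p L1) + ctime p L2 j"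
proof -
  assume "j \<notin> set L1"
  hence "takeWhile (\<lambda>x. x \<noteq> j) (L1 @ L2) = L1 @ takeWhile (\<lambda>x. x \<noteq> j) L2"
    by (intro takeWhile_append2) auto
  thus ?thesis by (simp add: ctime_def)
qed

lemma W_dist: "distinct L \<Longrightarrow> 2 * (\<Sum>j\<in>set L. p j * ctime p L j) = (sum_list (map p L))^2 + (\<Sum>j\<in>set L. p j ^ 2)"
proof (induction L)
  case Nil then show ?case by simp
next
  case (Cons a L)
  have c1: "ctime p (a # L) a = p a" by (simp add: ctime_def)
  have c2: "ctime p (a # L) j = p a + ctime p L j" if "j \<in> set L" for j
    using that Cons.prems by (auto simp: ctime_def)
  have "(\<Sum>j\<in>set (a#L). p j * ctime p (a#L) j) = p a * p a + (\<Sum>j\<in>set L. p j * ctime p (a#L) j)"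
    using Cons.prems c1 by simp
  also have "(\<Sum>j\<in>set L. p j * ctime p (a#L) j) = (\<Sum>j\<in>set L. p a * p j + p j * ctime p L j)"
    by (rule sum.cong) (auto simp: c2 algebra_simps)
  also have "\<dots> = p a * sum_list (map p L) + (\<Sum>j\<in>set L. p j * ctime p L j)"
    using Cons.prems by (simp add: sum.distrib sum_distrib_left sum_list_distinct_conv_sum_set)
  finally have e: "(\<Sum>j\<in>set (a#L). p j * ctime p (a#L) j) = p a * p a + p a * sum_list (map p L) + (\<Sum>j\<in>set L. p j * ctime p L j)" by simp
  have "2 * (\<Sum>j\<in>set L. p j * ctime p L j) = (sum_list (map p L))^2 + (\<Sum>j\<in>set L. p j ^ 2)"
    using Cons by simp
  then show ?case using e Cons.prems by (simp add: power2_eq_square algebra_simps)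
qed

lemma reindex:
  fixes m n :: nat
  assumes "\<forall>j\<in>{1..n}. g j \<in> {1..m}"
    and "\<forall>l\<in>{1..m}. set (S l) = {j\<in>{1..n}. g j = l}"
  shows "(\<Sum>l\<in>{1..m}. \<Sum>j\<in>set (S l). f l j) = (\<Sum>j\<in>{1..(n::nat)}. f (g j) j)"
proof -
  have "(\<Sum>l\<in>{1..m}. \<Sum>j\<in>set (S l). f l j) = (\<Sum>l\<in>{1..m}. \<Sum>j\<in>{1..n}. if g j = l then f l j else 0)"
  proof (rule sum.cong[OF refl])
    fix l assume "l \<in> {1..m}"
    hence "set (S l) = {j\<in>{1..n}. g j = l}" using assms(2) by blast
    thus "(\<Sum>j\<in>set (S l). f l j) = (\<Sum>j\<in>{1..n}. if g j = l then f l j else 0)"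
      by (simp only: sum.inter_filter[OF finite_atLeastAtMost])
  qed
  also have "\<dots> = (\<Sum>j\<in>{1..n}. \<Sum>l\<in>{1..(m::nat)}. if g j = l then f l j else 0)"
    by (rule sum.swap)
  also have "\<dots> = (\<Sum>j\<in>{1..n}. f (g j) j)"
    using assms(1) by (intro sum.cong refl) (simp add: sum.delta' eq_commute[of "g _"] if_distrib cong: if_cong)
  finally show ?thesis .
qed

lemma PP_mono: "finite B \<Longrightarrow> A \<subseteq> B \<Longrightarrow> PP p A \<le> PP p B"
  by (simp add: PP_def sum_mono2)

lemma PP_Un_le: "finite A \<Longrightarrow> finite B \<Longrightarrow> PP p (A \<union> B) \<le> PP p A + PP p B"
  by (simp add: PP_def sum_Un_nat)

lemma PP_Un: "finite A \<Longrightarrow> finite B \<Longrightarrow> A \<inter> B = {} \<Longrightarrow> PP p (A \<union> B) = PP p A + PP p B"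
  by (simp add: PP_def sum.union_disjoint)

lemma drop_split: "sorted_wrt (<) L \<Longrightarrow> a \<in> set L - set (drop d L) \<Longrightarrow> b \<in> set (drop d L) \<Longrightarrow> a < (b::nat)"
proof -
  assume s: "sorted_wrt (<) L" and a: "a \<in> set L - set (drop d L)" and b: "b \<in> set (drop d L)"
  have "L = take d L @ drop d L" by simp
  hence s2: "sorted_wrt (<) (take d L @ drop d L)" using s by simp
  have "a \<in> set (take d L)" using a by (metis DiffE Un_iff append_take_drop_id set_append)
  thus ?thesis using s2 b unfolding sorted_wrt_append by blast
qed

lemma take_split: "sorted_wrt (<) L \<Longrightarrow> a \<in> set (take d L) \<Longrightarrow> b \<in> set L - set (take d L) \<Longrightarrow> a < (b::nat)"
proof -
  assume s: "sorted_wrt (<) L" and a: "a \<in> set (take d L)" and b: "b \<in> set L - set (take d L)"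
  have "L = take d L @ drop d L" by simp
  hence s2: "sorted_wrt (<) (take d L @ drop d L)" using s by simp
  have "b \<in> set (drop d L)" using b by (metis DiffE Un_iff append_take_drop_id set_append)
  thus ?thesis using s2 a unfolding sorted_wrt_append by blast
qed



theorem lemma5:
  fixes n m :: nat and p w :: "nat \<Rightarrow> nat" and \<sigma> :: "nat \<Rightarrow> nat"
    and js h i :: nat and H' I' :: "nat set"
  assumes ppos: "\<forall>j\<in>{1..n}. p j > 0"
    and order: "\<forall>j\<in>{1..n}. \<forall>k\<in>{1..n}. j \<le> k \<longrightarrow> real (w j) / real (p j) \<ge> real (w k) / real (p k)"
    and proper_sched: "proper n m \<sigma>"
    and adm: "admissible n m p \<sigma> js h i"
    and Hsub: "H' \<subseteq> JH n p \<sigma> h js" and Hne: "H' \<noteq> {}"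
    and Isub: "I' \<subseteq> JI n p \<sigma> i js" and Ine: "I' \<noteq> {}"
    and eqP: "PP p H' = PP p I'"
  shows "twct m p w (swap_seq n p \<sigma> js h i H' I') \<le> twct m p w (proper_seq n \<sigma>)"
proof -
  define pm where "pm = pmax n p"
  define Jh where "Jh = Jm n \<sigma> h"
  define Ji where "Ji = Jm n \<sigma> i"
  define Ph where "Ph = Jpre n \<sigma> h js"
  define Pi where "Pi = Jpre n \<sigma> i js"
  define JHs where "JHs = JH n p \<sigma> h js"
  define JIs where "JIs = JI n p \<sigma> i js"
  define A where "A = Ph - JHs"
  define Rh where "Rh = Jh - Ph"
  define Ri where "Ri = Ji - Pi - JIs"
  define X where "X = PP p H'"
  define Th where "Th = PP p Ph"
  define Ti where "Ti = PP p Pi"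
  have js: "js \<in> {1..n}" "js \<in> Jh" "h \<in> {1..m}" "i \<in> {1..m}"
    and diff: "int Th - int Ti \<ge> 4 * int pm ^ 2"
    using adm unfolding admissible_def Jh_def Th_def Ti_def Ph_def Pi_def pm_def by auto
  have pbound: "p x \<le> pm" if "x \<in> {1..n}" for x
    unfolding pm_def pmax_def using that by (intro Max_ge) auto
  have "pm > 0" using pbound[OF js(1)] ppos js(1) by fastforce
  have Jh_eq: "Jh = {j\<in>{1..n}. \<sigma> j = h}" and Ji_eq: "Ji = {j\<in>{1..n}. \<sigma> j = i}"
    by (simp_all add: Jh_def Ji_def Jm_def)
  have finJ: "finite Jh" "finite Ji" by (simp_all add: Jh_eq Ji_eq)
  have Ph_eq: "Ph = {j\<in>Jh. j \<le> js}" and Pi_eq: "Pi = {j\<in>Ji. j \<le> js}"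
    by (auto simp: Ph_def Pi_def Jpre_def Jh_def Ji_def Jm_def)
  have finP: "finite Ph" "finite Pi" using finJ by (simp_all add: Ph_eq Pi_eq)
  have hi: "h \<noteq> i"
  proof
    assume "h = i"
    hence "Th = Ti" by (simp add: Th_def Ti_def Ph_def Pi_def)
    thus False using diff \<open>pm > 0\<close> by simp
  qed
  define LH where "LH = sorted_list_of_set Ph"
  have sLH: "sorted_wrt (<) LH" and setLH: "set LH = Ph"
    using finP by (simp_all add: LH_def strict_sorted_list_of_set)
  have JHs_eq: "JHs = set (drop (length LH - 2 * pm) LH)"
    by (simp add: JHs_def JH_def LH_def Ph_def pm_def Let_def)
  have JHsub: "JHs \<subseteq> Ph" unfolding JHs_eq setLH[symmetric] by (rule set_drop_subset)
  have AJH: "a < b" if "a \<in> A" "b \<in> JHs" for a b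
    using that unfolding A_def by (intro drop_split[OF sLH, where d="length LH - 2 * pm"]) (simp_all add: setLH flip: JHs_eq)
  have cardJH: "card JHs \<le> 2 * pm"
  proof -
    have "card JHs \<le> length (drop (length LH - 2 * pm) LH)" unfolding JHs_eq by (rule card_length)
    also have "\<dots> \<le> 2 * pm" by simp
    finally show ?thesis .
  qed
  define LI where "LI = sorted_list_of_set (Ji - Pi)"
  have sLI: "sorted_wrt (<) LI" and setLI: "set LI = Ji - Pi"
    using finJ by (simp_all add: LI_def strict_sorted_list_of_set)
  have JIs_eq: "JIs = set (take (2 * pm) LI)"
    by (simp add: JIs_def JI_def LI_def Pi_def Ji_def pm_def)
  have JIsub: "JIs \<subseteq> Ji - Pi" unfolding JIs_eq setLI[symmetric] by (rule set_take_subset)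
  have JIR: "a < b" if "a \<in> JIs" "b \<in> Ri" for a b
    using that unfolding Ri_def by (intro take_split[OF sLI, where d="2 * pm"]) (simp_all add: setLI Diff_Diff_Int flip: JIs_eq)
  have cardJI: "card JIs \<le> 2 * pm"
  proof -
    have "card JIs \<le> length (take (2 * pm) LI)" unfolding JIs_eq by (rule card_length)
    also have "\<dots> \<le> 2 * pm" by simp
    finally show ?thesis .
  qed
  have finH: "finite JHs" "finite JIs" "finite A" "finite Rh" "finite Ri" "finite H'" "finite I'"
  proof -
    have f1: "finite JHs" using JHsub finP(1) by (rule finite_subset)
    have f2: "finite JIs" using JIsub finJ(2) by (meson finite_Diff finite_subset)
    show "finite JHs" "finite JIs" "finite A" "finite Rh" "finite Ri" using f1 f2 finP finJ
      by (simp_all add: A_def Rh_def Ri_def)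
    show "finite H'" using Hsub f1 by (simp add: JHs_def finite_subset)
    show "finite I'" using Isub f2 by (simp add: JIs_def finite_subset)
  qed
  have PJH: "PP p JHs \<le> 2 * pm * pm"
  proof -
    have "PP p JHs \<le> (\<Sum>x\<in>JHs. pm)" unfolding PP_def
      using JHsub Ph_eq Jh_eq by (intro sum_mono) (auto intro!: pbound)
    hence "PP p JHs \<le> card JHs * pm" by simp
    also have "\<dots> \<le> 2 * pm * pm" using cardJH by simp
    finally show ?thesis .
  qed
  have PJI: "PP p JIs \<le> 2 * pm * pm"
  proof -
    have "PP p JIs \<le> (\<Sum>x\<in>JIs. pm)" unfolding PP_def
      using JIsub Ji_eq by (intro sum_mono) (auto intro!: pbound)
    hence "PP p JIs \<le> card JIs * pm" by simp
    also have "\<dots> \<le> 2 * pm * pm" using cardJI by simp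
    finally show ?thesis .
  qed
  have XJH: "X \<le> PP p JHs" unfolding X_def using Hsub finH by (intro PP_mono) (auto simp: JHs_def)
  have XI: "PP p I' = X" using eqP X_def by simp
  have key1: "Ti + X + PP p JHs \<le> Th" and key2: "Ti + PP p JIs + X \<le> Th"
  proof -
    have "int Ti + 4 * (int pm * int pm) \<le> int Th" using diff by (simp add: power2_eq_square)
    moreover have "int (PP p JHs) \<le> 2 * (int pm * int pm)" "int (PP p JIs) \<le> 2 * (int pm * int pm)"
      using PJH PJI by (simp_all add: mult.assoc flip: of_nat_mult)
    moreover have "int X \<le> int (PP p JHs)" using XJH by simp
    ultimately show "Ti + X + PP p JHs \<le> Th" "Ti + PP p JIs + X \<le> Th" by linarith+
  qed
  have hsub: "H' \<subseteq> JHs" "I' \<subseteq> JIs" using Hsub Isub by (simp_all add: JHs_def JIs_def)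
  have HJh: "H' \<subseteq> Jh" using hsub JHsub Ph_eq by auto
  have IJi: "I' \<subseteq> Ji" using hsub JIsub by auto
  have JhJi: "Jh \<inter> Ji = {}" using hi by (auto simp: Jh_eq Ji_eq)
  have HI: "H' \<inter> I' = {}" using HJh IJi JhJi by auto
  have sumJH: "PP p JHs = PP p (JHs - H') + X"
  proof -
    have "JHs = (JHs - H') \<union> H'" using hsub by auto
    hence "PP p JHs = PP p ((JHs - H') \<union> H')" by simp
    also have "\<dots> = PP p (JHs - H') + PP p H'" using finH by (intro PP_Un) auto
    finally show ?thesis by (simp add: X_def)
  qed
  have sumPh: "Th = PP p A + PP p JHs"
  proof -
    have "Ph = A \<union> JHs" using JHsub by (auto simp: A_def)
    hence "PP p Ph = PP p (A \<union> JHs)" by simp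
    also have "\<dots> = PP p A + PP p JHs" using finH by (intro PP_Un) (auto simp: A_def)
    finally show ?thesis by (simp add: Th_def)
  qed
  have sumJI: "PP p JIs = X + PP p (JIs - I')"
  proof -
    have "JIs = I' \<union> (JIs - I')" using hsub by auto
    hence "PP p JIs = PP p (I' \<union> (JIs - I'))" by simp
    also have "\<dots> = PP p I' + PP p (JIs - I')" using finH by (intro PP_Un) auto
    finally show ?thesis by (simp add: XI)
  qed
  have sumJh: "PP p Jh = Th + PP p Rh"
  proof -
    have "Jh = Ph \<union> Rh" using Ph_eq by (auto simp: Rh_def)
    hence "PP p Jh = PP p (Ph \<union> Rh)" by simp
    also have "\<dots> = PP p Ph + PP p Rh" using finH finP by (intro PP_Un) (auto simp: Rh_def)
    finally show ?thesis by (simp add: Th_def)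
  qed
  have sumJi: "PP p Ji = Ti + PP p JIs + PP p Ri"
  proof -
    have "Ji = Pi \<union> (JIs \<union> Ri)" using Pi_eq JIsub by (auto simp: Ri_def)
    hence "PP p Ji = PP p (Pi \<union> (JIs \<union> Ri))" by simp
    also have "\<dots> = PP p Pi + PP p (JIs \<union> Ri)" using finH finP JIsub by (intro PP_Un) (auto simp: Ri_def)
    also have "PP p (JIs \<union> Ri) = PP p JIs + PP p Ri" using finH by (intro PP_Un) (auto simp: Ri_def)
    finally show ?thesis by (simp add: Ti_def)
  qed
  define S where "S = proper_seq n \<sigma>"
  define S' where "S' = swap_seq n p \<sigma> js h i H' I'"
  have Sl: "S l = sorted_list_of_set (Jm n \<sigma> l)" for l by (simp add: S_def proper_seq_def)
  have S'h: "S' h = sorted_list_of_set A @ sorted_list_of_set (JHs - H') @ sorted_list_of_set I' @ sorted_list_of_set Rh"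
    by (simp add: S'_def swap_seq_def A_def JHs_def Ph_def Rh_def Jh_def)
  have S'i: "S' i = sorted_list_of_set Pi @ sorted_list_of_set H' @ sorted_list_of_set (JIs - I') @ sorted_list_of_set Ri"
    using hi by (simp add: S'_def swap_seq_def Pi_def JIs_def Ri_def Ji_def)
  have S'o: "S' l = S l" if "l \<noteq> h" "l \<noteq> i" for l
    using that by (simp add: S'_def S_def swap_seq_def)
  define g where "g j = (if j \<in> H' then i else if j \<in> I' then h else \<sigma> j)" for j
  define C where "C j = ctime p (S (\<sigma> j)) j" for j
  define C' where "C' j = ctime p (S' (g j)) j" for j
  have Ch: "C j = PP p {x\<in>Jh. x < j} + p j" if "j \<in> Jh" for j
  proof -
    have "\<sigma> j = h" using that Jh_eq by simp
    thus ?thesis using that finJ by (simp add: C_def Sl ctime_sorted flip: Jh_def)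
  qed
  have Ci: "C j = PP p {x\<in>Ji. x < j} + p j" if "j \<in> Ji" for j
  proof -
    have "\<sigma> j = i" using that Ji_eq by simp
    thus ?thesis using that finJ by (simp add: C_def Sl ctime_sorted flip: Ji_def)
  qed
  have finS: "finite {x\<in>Y. x < (j::nat)}" if "finite Y" for Y j using that by simp
  have cmp: "(j \<le> js \<longrightarrow> C' j \<le> C j) \<and> (js < j \<longrightarrow> C j \<le> C' j)" if j: "j \<in> {1..n}" for j
  proof -
    consider (H) "j \<in> H'" | (I) "j \<in> I'" | (hh) "j \<notin> H'" "j \<notin> I'" "\<sigma> j = h"
      | (ii) "j \<notin> H'" "j \<notin> I'" "\<sigma> j = i" | (oth) "j \<notin> H'" "j \<notin> I'" "\<sigma> j \<noteq> h" "\<sigma> j \<noteq> i" by blast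
    then show ?thesis
    proof cases
      case H
      have jJH: "j \<in> JHs" using H hsub by auto
      have jle: "j \<le> js" using jJH JHsub Ph_eq by auto
      have jJh: "j \<in> Jh" using H HJh by auto
      have "j \<notin> Pi" using jJh Pi_eq JhJi by auto
      have "C' j = Ti + PP p {x\<in>H'. x < j} + p j"
        using H \<open>j \<notin> Pi\<close> finH finP by (simp add: C'_def g_def S'i ctime_app1 ctime_app2 sl_sorted ctime_sorted Ti_def)
      moreover have "PP p {x\<in>H'. x < j} \<le> X" unfolding X_def using finH by (intro PP_mono) auto
      moreover have "PP p A \<le> PP p {x\<in>Jh. x < j}" using AJH jJH finJ by (intro PP_mono) (auto simp: A_def Ph_eq)
      moreover have "C j = PP p {x\<in>Jh. x < j} + p j" using Ch jJh by simp
      ultimately show ?thesis using jle key1 sumPh by linarith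
    next
      case I
      have jJI: "j \<in> JIs" using I hsub by auto
      have jJi: "j \<in> Ji" using I IJi by auto
      have jgt: "js < j" using jJI JIsub Pi_eq by auto
      have "j \<notin> H'" using I HI by auto
      have "j \<notin> A" "j \<notin> JHs - H'" using jJi JhJi JHsub Ph_eq by (auto simp: A_def)
      have "C' j = PP p A + PP p (JHs - H') + PP p {x\<in>I'. x < j} + p j"
        using I \<open>j \<notin> H'\<close> \<open>j \<notin> A\<close> \<open>j \<notin> JHs - H'\<close> finH
        by (simp add: C'_def g_def S'h ctime_app1 ctime_app2 sl_sorted ctime_sorted)
      moreover have "PP p {x\<in>Ji. x < j} \<le> PP p (Pi \<union> JIs)"
      proof (rule PP_mono)
        show "finite (Pi \<union> JIs)" using finP finH by simp
        show "{x\<in>Ji. x < j} \<subseteq> Pi \<union> JIs"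
        proof
          fix x assume x: "x \<in> {x\<in>Ji. x < j}"
          show "x \<in> Pi \<union> JIs"
          proof (rule ccontr)
            assume "x \<notin> Pi \<union> JIs"
            hence "x \<in> Ri" using x by (auto simp: Ri_def)
            hence "j < x" using JIR[OF jJI] by simp
            thus False using x by simp
          qed
        qed
      qed
      moreover have "PP p (Pi \<union> JIs) \<le> Ti + PP p JIs" unfolding Ti_def using finP finH by (intro PP_Un_le) auto
      moreover have "C j = PP p {x\<in>Ji. x < j} + p j" using Ci jJi by simp
      ultimately show ?thesis using jgt key2 sumPh sumJH by linarith
    next
      case hh
      have jJh: "j \<in> Jh" using hh j Jh_eq by simp
      have gj: "g j = h" using hh by (simp add: g_def)
      have Cj: "C j = PP p {x\<in>Jh. x < j} + p j" using Ch jJh by simp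
      consider "j \<in> A" | "j \<in> JHs - H'" | "j \<in> Rh" using jJh hh JHsub by (auto simp: A_def Rh_def)
      then show ?thesis
      proof cases
        case 1
        have "C' j = PP p {x\<in>A. x < j} + p j"
          using 1 finH by (simp add: C'_def gj S'h ctime_app1 ctime_sorted)
        moreover have "PP p {x\<in>A. x < j} \<le> PP p {x\<in>Jh. x < j}" using finJ by (intro PP_mono) (auto simp: A_def Ph_eq)
        moreover have "j \<le> js" using 1 by (simp add: A_def Ph_eq)
        ultimately show ?thesis using Cj by simp
      next
        case 2
        have "j \<notin> A" using 2 by (simp add: A_def)
        have "C' j = PP p A + PP p {x\<in>JHs - H'. x < j} + p j"
          using 2 \<open>j \<notin> A\<close> finH by (simp add: C'_def gj S'h ctime_app1 ctime_app2 sl_sorted ctime_sorted)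
        moreover have "PP p A + PP p {x\<in>JHs - H'. x < j} = PP p (A \<union> {x\<in>JHs - H'. x < j})"
          using finH by (intro PP_Un[symmetric]) (auto simp: A_def)
        moreover have "PP p (A \<union> {x\<in>JHs - H'. x < j}) \<le> PP p {x\<in>Jh. x < j}"
          using finJ 2 AJH JHsub Ph_eq by (intro PP_mono) (auto simp: A_def)
        moreover have "j \<le> js" using 2 JHsub Ph_eq by auto
        ultimately show ?thesis using Cj by simp
      next
        case 3
        have "j \<notin> A" "j \<notin> JHs - H'" "j \<notin> I'" using 3 hh JHsub by (auto simp: A_def Rh_def)
        have "C' j = PP p A + PP p (JHs - H') + PP p I' + PP p {x\<in>Rh. x < j} + p j"
          using 3 \<open>j \<notin> A\<close> \<open>j \<notin> JHs - H'\<close> \<open>j \<notin> I'\<close> finH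
          by (simp add: C'_def gj S'h ctime_app1 ctime_app2 sl_sorted ctime_sorted)
        moreover have "PP p {x\<in>Jh. x < j} \<le> PP p (Ph \<union> {x\<in>Rh. x < j})"
          using finP finH by (intro PP_mono) (auto simp: Rh_def)
        moreover have "PP p (Ph \<union> {x\<in>Rh. x < j}) \<le> Th + PP p {x\<in>Rh. x < j}"
          unfolding Th_def using finP finH by (intro PP_Un_le) auto
        moreover have "js < j" using 3 Ph_eq by (auto simp: Rh_def)
        ultimately show ?thesis using Cj sumPh sumJH XI by linarith
      qed
    next
      case ii
      have jJi: "j \<in> Ji" using ii j Ji_eq by simp
      have gj: "g j = i" using ii by (simp add: g_def)
      have Cj: "C j = PP p {x\<in>Ji. x < j} + p j" using Ci jJi by simp
      consider "j \<in> Pi" | "j \<in> JIs - I'" | "j \<in> Ri" using jJi ii by (auto simp: Ri_def)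
      then show ?thesis
      proof cases
        case 1
        have "C' j = PP p {x\<in>Pi. x < j} + p j"
          using 1 finP by (simp add: C'_def gj S'i ctime_app1 ctime_sorted)
        moreover have "PP p {x\<in>Pi. x < j} \<le> PP p {x\<in>Ji. x < j}" using finJ by (intro PP_mono) (auto simp: Pi_eq)
        moreover have "j \<le> js" using 1 by (simp add: Pi_eq)
        ultimately show ?thesis using Cj by simp
      next
        case 2
        have "j \<notin> Pi" using 2 JIsub by auto
        have "C' j = Ti + X + PP p {x\<in>JIs - I'. x < j} + p j"
          using 2 \<open>j \<notin> Pi\<close> ii finH finP
          by (simp add: C'_def gj S'i ctime_app1 ctime_app2 sl_sorted ctime_sorted Ti_def X_def)
        moreover have "PP p {x\<in>Ji. x < j} \<le> PP p (Pi \<union> (I' \<union> {x\<in>JIs - I'. x < j}))"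
        proof (rule PP_mono)
          show "finite (Pi \<union> (I' \<union> {x\<in>JIs - I'. x < j}))" using finP finH by simp
          show "{x\<in>Ji. x < j} \<subseteq> Pi \<union> (I' \<union> {x\<in>JIs - I'. x < j})"
          proof
            fix x assume x: "x \<in> {x\<in>Ji. x < j}"
            show "x \<in> Pi \<union> (I' \<union> {x\<in>JIs - I'. x < j})"
            proof (rule ccontr)
              assume "x \<notin> Pi \<union> (I' \<union> {x\<in>JIs - I'. x < j})"
              hence "x \<in> Ri" using x by (auto simp: Ri_def)
              hence "j < x" using JIR 2 by simp
              thus False using x by simp
            qed
          qed
        qed
        moreover have "PP p (Pi \<union> (I' \<union> {x\<in>JIs - I'. x < j})) \<le> Ti + (X + PP p {x\<in>JIs - I'. x < j})"
        proof -
          have "PP p (Pi \<union> (I' \<union> {x\<in>JIs - I'. x < j})) \<le> PP p Pi + PP p (I' \<union> {x\<in>JIs - I'. x < j})"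
            using finP finH by (intro PP_Un_le) auto
          moreover have "PP p (I' \<union> {x\<in>JIs - I'. x < j}) \<le> PP p I' + PP p {x\<in>JIs - I'. x < j}"
            using finH by (intro PP_Un_le) auto
          ultimately show ?thesis using XI Ti_def by simp
        qed
        moreover have "js < j" using 2 JIsub Pi_eq by auto
        ultimately show ?thesis using Cj by simp
      next
        case 3
        have "j \<notin> Pi" "j \<notin> JIs - I'" using 3 by (auto simp: Ri_def)
        have "C' j = Ti + X + PP p (JIs - I') + PP p {x\<in>Ri. x < j} + p j"
          using 3 \<open>j \<notin> Pi\<close> \<open>j \<notin> JIs - I'\<close> ii finH finP
          by (simp add: C'_def gj S'i ctime_app1 ctime_app2 sl_sorted ctime_sorted Ti_def X_def)
        moreover have "PP p {x\<in>Ji. x < j} \<le> PP p (Pi \<union> (JIs \<union> {x\<in>Ri. x < j}))"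
          using finP finH by (intro PP_mono) (auto simp: Ri_def)
        moreover have "PP p (Pi \<union> (JIs \<union> {x\<in>Ri. x < j})) \<le> Ti + (PP p JIs + PP p {x\<in>Ri. x < j})"
        proof -
          have "PP p (Pi \<union> (JIs \<union> {x\<in>Ri. x < j})) \<le> PP p Pi + PP p (JIs \<union> {x\<in>Ri. x < j})"
            using finP finH by (intro PP_Un_le) auto
          moreover have "PP p (JIs \<union> {x\<in>Ri. x < j}) \<le> PP p JIs + PP p {x\<in>Ri. x < j}"
            using finH by (intro PP_Un_le) auto
          ultimately show ?thesis using Ti_def by simp
        qed
        moreover have "js < j" using 3 Pi_eq by (auto simp: Ri_def)
        ultimately show ?thesis using Cj sumJI by linarith
      qed
    next
      case oth
      have "g j = \<sigma> j" using oth by (simp add: g_def)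
      hence "C' j = C j" using oth by (simp add: C'_def C_def S'o)
      thus ?thesis by simp
    qed
  qed
  have g_range: "\<forall>j\<in>{1..n}. g j \<in> {1..m}"
    using proper_sched js(3,4) by (auto simp: proper_def g_def)
  have s_range: "\<forall>j\<in>{1..n}. \<sigma> j \<in> {1..m}" using proper_sched by (simp add: proper_def)
  have setS: "\<forall>l\<in>{1..m}. set (S l) = {j\<in>{1..n}. \<sigma> j = l}"
    by (simp add: Sl Jm_def)
  have IJi': "I' \<subseteq> {1..n}" "H' \<subseteq> {1..n}" using IJi HJh by (auto simp: Ji_eq Jh_eq)
  have setS'h: "set (S' h) = (Jh - H') \<union> I'"
    using finH JHsub hsub Ph_eq by (auto simp: S'h A_def Rh_def)
  have setS'i: "set (S' i) = (Ji - I') \<union> H'"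
    using finH finP JIsub hsub Pi_eq by (auto simp: S'i Ri_def)
  have setS': "\<forall>l\<in>{1..m}. set (S' l) = {j\<in>{1..n}. g j = l}"
  proof
    fix l assume l: "l \<in> {1..m}"
    show "set (S' l) = {j\<in>{1..n}. g j = l}"
    proof (cases "l = h")
      case True
      thus ?thesis using setS'h IJi' HI hi IJi JhJi by (auto simp: g_def Jh_eq)
    next
      case False
      show ?thesis
      proof (cases "l = i")
        case True
        thus ?thesis using setS'i IJi' HI hi HJh JhJi by (auto simp: g_def Ji_eq)
      next
        case False2: False
        have "set (S' l) = {j\<in>{1..n}. \<sigma> j = l}" using S'o[OF False False2] setS l by simp
        also have "\<dots> = {j\<in>{1..n}. g j = l}"
          using False False2 HJh IJi by (auto simp: g_def Jh_eq Ji_eq)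
        finally show ?thesis .
      qed
    qed
  qed
  have distS: "distinct (S l)" for l by (simp add: Sl)
  have distS': "distinct (S' l)" for l
  proof -
    have "distinct (S' h)" using finH JHsub hsub IJi JhJi Ph_eq by (auto simp: S'h A_def Rh_def)
    moreover have "distinct (S' i)" using finH finP JIsub hsub HJh JhJi Pi_eq by (auto simp: S'i Ri_def)
    ultimately show ?thesis using S'o distS by metis
  qed
  have slS: "sum_list (map p (S l)) = PP p (Jm n \<sigma> l)" for l by (simp add: Sl sl_sorted Jm_def)
  have slS': "sum_list (map p (S' l)) = sum_list (map p (S l))" for l
  proof -
    have "sum_list (map p (S' h)) = sum_list (map p (S h))"
      using finH sumJh sumPh sumJH XI by (simp add: S'h sl_sorted slS flip: Jh_def)
    moreover have "sum_list (map p (S' i)) = sum_list (map p (S i))"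
      using finH finP sumJi sumJI by (simp add: S'i sl_sorted slS Ti_def X_def flip: Ji_def)
    ultimately show ?thesis using S'o by metis
  qed
  have W: "2 * (\<Sum>j\<in>{1..n}. p j * ctime p (T (G j)) j) = (\<Sum>l\<in>{1..m}. (sum_list (map p (T l)))^2) + (\<Sum>j\<in>{1..n}. p j ^ 2)"
    if G: "\<forall>j\<in>{1..n}. G j \<in> {1..m}" and ST: "\<forall>l\<in>{1..m}. set (T l) = {j\<in>{1..n}. G j = l}"
      and dT: "\<And>l. distinct (T l)" for T G
  proof -
    have "(\<Sum>j\<in>{1..n}. p j * ctime p (T (G j)) j) = (\<Sum>l\<in>{1..m}. \<Sum>j\<in>set (T l). p j * ctime p (T l) j)"
      using reindex[OF G ST, of "\<lambda>l j. p j * ctime p (T l) j"] by simp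
    moreover have "(\<Sum>j\<in>{1..n}. p j ^ 2) = (\<Sum>l\<in>{1..m}. \<Sum>j\<in>set (T l). p j ^ 2)"
      using reindex[OF G ST, of "\<lambda>l j. p j ^ 2"] by simp
    moreover have "2 * (\<Sum>l\<in>{1..m}. \<Sum>j\<in>set (T l). p j * ctime p (T l) j)
        = (\<Sum>l\<in>{1..m}. (sum_list (map p (T l)))^2 + (\<Sum>j\<in>set (T l). p j ^ 2))"
      by (rule trans[OF sum_distrib_left], rule sum.cong[OF refl], rule W_dist[OF dT])
    ultimately show ?thesis by (simp add: sum.distrib)
  qed
  have inv: "(\<Sum>j\<in>{1..n}. p j * C' j) = (\<Sum>j\<in>{1..n}. p j * C j)"
  proof -
    have "2 * (\<Sum>j\<in>{1..n}. p j * C' j) = 2 * (\<Sum>j\<in>{1..n}. p j * C j)"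
      using W[OF g_range setS' distS'] W[OF s_range setS distS] slS' by (simp add: C_def C'_def)
    thus ?thesis by simp
  qed
  have tw': "twct m p w S' = (\<Sum>j\<in>{1..n}. w j * C' j)"
    unfolding twct_def C'_def using reindex[OF g_range setS', of "\<lambda>l j. w j * ctime p (S' l) j"] by simp
  have tw: "twct m p w S = (\<Sum>j\<in>{1..n}. w j * C j)"
    unfolding twct_def C_def using reindex[OF s_range setS, of "\<lambda>l j. w j * ctime p (S l) j"] by simp
  define \<rho> where "\<rho> = real (w js) / real (p js)"
  have per: "real (w j) * real (C' j) - real (w j) * real (C j) \<le> \<rho> * (real (p j) * real (C' j) - real (p j) * real (C j))"
    if j: "j \<in> {1..n}" for j
  proof -
    define e where "e = real (w j) / real (p j)"
    have pj: "real (p j) > 0" using ppos j by simp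
    have we: "real (w j) = e * real (p j)" using pj by (simp add: e_def)
    have "(e - \<rho>) * real (p j) * (real (C' j) - real (C j)) \<le> 0"
    proof (cases "j \<le> js")
      case True
      hence "e \<ge> \<rho>" using order j js(1) by (simp add: e_def \<rho>_def)
      moreover have "real (C' j) \<le> real (C j)" using cmp[OF j] True by simp
      ultimately show ?thesis using pj by (intro mult_nonneg_nonpos) auto
    next
      case False
      hence "e \<le> \<rho>" using order j js(1) by (simp add: e_def \<rho>_def)
      moreover have "real (C j) \<le> real (C' j)" using cmp[OF j] False by simp
      ultimately show ?thesis using pj by (intro mult_nonpos_nonneg) auto
    qed
    thus ?thesis by (simp add: we algebra_simps)
  qed
  have "real (\<Sum>j\<in>{1..n}. w j * C' j) - real (\<Sum>j\<in>{1..n}. w j * C j)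
      = (\<Sum>j\<in>{1..n}. real (w j) * real (C' j) - real (w j) * real (C j))"
    by (simp add: sum_subtractf)
  also have "\<dots> \<le> (\<Sum>j\<in>{1..n}. \<rho> * (real (p j) * real (C' j) - real (p j) * real (C j)))"
    using per by (rule sum_mono)
  also have "\<dots> = \<rho> * (real (\<Sum>j\<in>{1..n}. p j * C' j) - real (\<Sum>j\<in>{1..n}. p j * C j))"
    by (simp add: right_diff_distrib sum_distrib_left sum_subtractf)
  also have "\<dots> = 0" using inv by simp
  finally have "real (\<Sum>j\<in>{1..n}. w j * C' j) \<le> real (\<Sum>j\<in>{1..n}. w j * C j)" by simp
  hence "(\<Sum>j\<in>{1..n}. w j * C' j) \<le> (\<Sum>j\<in>{1..n}. w j * C j)" by (simp only: of_nat_le_iff)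
  thus ?thesis using tw tw' by (simp add: S_def S'_def)
qed

end
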